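(* Let $(\Gamma,M)$ be a connected E-GCM graph which is unital OA-cyclic. If the Coxeter group $W=W(\Gamma,M)$ is infinite, then $U_M\cap(-U_M)=\{0\}$.
   Context: E-GCM $M=(M_{ij})_{i,j\in I_n}$: real, $M_{ii}=2$, $M_{ij}\le0$ ($i\ne j$), $M_{ij}\ne0\iff M_{ji}\ne0$, nonzero $M_{ij}M_{ji}$ either $\ge4$ or $=4\cos^2(\pi/m)$ with $m\ge3$ integer; E-GCM graph with nodes $\gamma_i$, adjacent iff $M_{ij}\neq0$. $W=W(\Gamma,M)$: generators $s_i$, $s_i^2=e$, $(s_is_j)^{m_{ij}}=e$, with $m_{ij}=k$ if $M_{ij}M_{ji}=4\cos^2(\pi/k)$ ($k\ge2$ integer), $m_{ij}=\infty$ if $M_{ij}M_{ji}\ge4$. $W$ acts on real $V$ with basis $(\alpha_i)$ by $s_i.\alpha_j=\alpha_j-M_{ij}\alpha_i$, and on the dual space $V^*$ by $\langle w.\lambda,v\rangle=\langle\lambda,w^{-1}.v\rangle$. Let $D=\{\lambda\in V^*:\langle\lambda,\alpha_i\rangle\ge0\ \forall i\}$ and the Tits cone $U_M=\bigcup_{w\in W}w.D$. Odd-adjacent: $m_{ij}$ odd; $K_{ji}:=-M_{ji}/(2\cos(\pi/m_{ij}))$. An OA-cycle is a sequence of nodes $[\gamma_{i_0},\dots,\gamma_{i_p}]$ with consecutive nodes odd-adjacent and $\gamma_{i_p}=\gamma_{i_0}$; $\Pi=K_{i_pi_{p-1}}\cdots K_{i_1i_0}$. $(\Gamma,M)$ is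 unital OA-cyclic if $\Pi=1$ for every OA-cycle. *)

theory Defs
  imports Complex_Main
begin

text \<open>The index set I_n is modelled by a finite type 'i; a matrix is M :: 'i => 'i => real.\<close>

definition egcm :: "('i \<Rightarrow> 'i \<Rightarrow> real) \<Rightarrow> bool" where
  "egcm M \<longleftrightarrow>
     (\<forall>i. M i i = 2) \<and>
     (\<forall>i j. i \<noteq> j \<longrightarrow> M i j \<le> 0) \<and>
     (\<forall>i j. M i j \<noteq> 0 \<longleftrightarrow> M j i \<noteq> 0) \<and>
     (\<forall>i j. i \<noteq> j \<longrightarrow> M i j * M j i \<noteq> 0 \<longrightarrow>
        M i j * M j i \<ge> 4 \<or> (\<exists>m::nat. m \<ge> 3 \<and> M i j * M j i = 4 * (cos (pi / real m))\<^sup>2))"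

definition egcm_adjacent :: "('i \<Rightarrow> 'i \<Rightarrow> real) \<Rightarrow> 'i \<Rightarrow> 'i \<Rightarrow> bool" where
  "egcm_adjacent M i j \<longleftrightarrow> i \<noteq> j \<and> M i j \<noteq> 0"

definition egcm_connected :: "('i \<Rightarrow> 'i \<Rightarrow> real) \<Rightarrow> bool" where
  "egcm_connected M \<longleftrightarrow> (\<forall>i j. (i, j) \<in> {(a, b). egcm_adjacent M a b}\<^sup>*)"

text \<open>m_ij for i \<noteq> j with M_ij M_ji < 4: the integer k \<ge> 2 with M_ij M_ji = 4 cos^2(pi/k).\<close>
definition cox_m :: "('i \<Rightarrow> 'i \<Rightarrow> real) \<Rightarrow> 'i \<Rightarrow> 'i \<Rightarrow> nat" where
  "cox_m M i j = (THE k. k \<ge> 2 \<and> M i j * M j i = 4 * (cos (pi / real k))\<^sup>2)"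

definition odd_adjacent :: "('i \<Rightarrow> 'i \<Rightarrow> real) \<Rightarrow> 'i \<Rightarrow> 'i \<Rightarrow> bool" where
  "odd_adjacent M i j \<longleftrightarrow> i \<noteq> j \<and>
     (\<exists>k::nat. k \<ge> 2 \<and> odd k \<and> M i j * M j i = 4 * (cos (pi / real k))\<^sup>2)"

definition Kcoef :: "('i \<Rightarrow> 'i \<Rightarrow> real) \<Rightarrow> 'i \<Rightarrow> 'i \<Rightarrow> real" where
  "Kcoef M j i = - M j i / (2 * cos (pi / real (cox_m M i j)))"

definition OA_cycle :: "('i \<Rightarrow> 'i \<Rightarrow> real) \<Rightarrow> 'i list \<Rightarrow> bool" where
  "OA_cycle M xs \<longleftrightarrow> xs \<noteq> [] \<and> last xs = hd xs \<and>
     (\<forall>k. Suc k < length xs \<longrightarrow> odd_adjacent M (xs ! k) (xs ! Suc k))"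

definition OA_product :: "('i \<Rightarrow> 'i \<Rightarrow> real) \<Rightarrow> 'i list \<Rightarrow> real" where
  "OA_product M xs = (\<Prod>k<length xs - 1. Kcoef M (xs ! Suc k) (xs ! k))"

definition unital_OA_cyclic :: "('i \<Rightarrow> 'i \<Rightarrow> real) \<Rightarrow> bool" where
  "unital_OA_cyclic M \<longleftrightarrow> (\<forall>xs. OA_cycle M xs \<longrightarrow> OA_product M xs = 1)"

text \<open>The Coxeter group W(Gamma,M) by generators and relations: words in the generators s_i
  (lists of indices) modulo the congruence generated by the defining relators.\<close>
inductive cox_relator :: "('i \<Rightarrow> 'i \<Rightarrow> real) \<Rightarrow> 'i list \<Rightarrow> bool" for M where
  inv: "cox_relator M [i, i]"
| braid: "\<lbrakk>i \<noteq> j; k \<ge> 2; M i j * M j i = 4 * (cos (pi / real k))\<^sup>2\<rbrakk>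
           \<Longrightarrow> cox_relator M (concat (replicate k [i, j]))"

inductive cox_eq :: "('i \<Rightarrow> 'i \<Rightarrow> real) \<Rightarrow> 'i list \<Rightarrow> 'i list \<Rightarrow> bool" for M where
  refl: "cox_eq M u u"
| sym: "cox_eq M u v \<Longrightarrow> cox_eq M v u"
| trans: "cox_eq M u v \<Longrightarrow> cox_eq M v w \<Longrightarrow> cox_eq M u w"
| rel: "cox_relator M r \<Longrightarrow> cox_eq M (u @ r @ v) (u @ v)"

definition coxeter_group_infinite :: "('i \<Rightarrow> 'i \<Rightarrow> real) \<Rightarrow> bool" where
  "coxeter_group_infinite M \<longleftrightarrow> infinite (UNIV // {(u, v). cox_eq M u v})"

text \<open>V^* is identified with 'i => real via lambda |-> (<lambda, alpha_j>)_j (dual basis coordinates).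
  Then <s_i.lambda, alpha_j> = <lambda, s_i.alpha_j> = lambda_j - M_ij lambda_i.\<close>
definition dual_refl :: "('i \<Rightarrow> 'i \<Rightarrow> real) \<Rightarrow> 'i \<Rightarrow> ('i \<Rightarrow> real) \<Rightarrow> ('i \<Rightarrow> real)" where
  "dual_refl M i l = (\<lambda>j. l j - M i j * l i)"

fun word_act :: "('i \<Rightarrow> 'i \<Rightarrow> real) \<Rightarrow> 'i list \<Rightarrow> ('i \<Rightarrow> real) \<Rightarrow> ('i \<Rightarrow> real)" where
  "word_act M [] l = l"
| "word_act M (i # w) l = dual_refl M i (word_act M w l)"

definition fund_chamber :: "('i \<Rightarrow> real) set" where
  "fund_chamber = {l. \<forall>i. l i \<ge> 0}"

definition tits_cone :: "('i \<Rightarrow> 'i \<Rightarrow> real) \<Rightarrow> ('i \<Rightarrow> real) set" where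
  "tits_cone M = (\<Union>w. word_act M w ` fund_chamber)"

end

theory Submission
  imports Defs
begin


definition uvec :: "'i \<Rightarrow> 'i \<Rightarrow> real" where
  "uvec i = (\<lambda>k. if k = i then 1 else 0)"
definition sc :: "real \<Rightarrow> ('i \<Rightarrow> real) \<Rightarrow> 'i \<Rightarrow> real" where
  "sc t x = (\<lambda>k. t * x k)"
definition ad :: "('i \<Rightarrow> real) \<Rightarrow> ('i \<Rightarrow> real) \<Rightarrow> 'i \<Rightarrow> real" where
  "ad x y = (\<lambda>k. x k + y k)"
definition ip :: "('i \<Rightarrow> real) \<Rightarrow> ('i \<Rightarrow> real) \<Rightarrow> real" where
  "ip x y = (\<Sum>k\<in>UNIV. x k * y k)"
definition vrefl :: "('i \<Rightarrow> 'i \<Rightarrow> real) \<Rightarrow> 'i \<Rightarrow> ('i \<Rightarrow> real) \<Rightarrow> 'i \<Rightarrow> real" where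
  "vrefl M i x = (\<lambda>k. x k - (if k = i then ip (M i) x else 0))"

fun vact :: "('i \<Rightarrow> 'i \<Rightarrow> real) \<Rightarrow> 'i list \<Rightarrow> ('i \<Rightarrow> real) \<Rightarrow> 'i \<Rightarrow> real" where
  "vact M [] x = x"
| "vact M (i # w) x = vrefl M i (vact M w x)"

lemma ip_sc: "ip y (sc t x) = t * ip y x"
  by (simp add: ip_def sc_def sum_distrib_left algebra_simps)

lemma ip_ad: "ip y (ad x z) = ip y x + ip y z"
  by (simp add: ip_def ad_def sum.distrib algebra_simps)

lemma vrefl_sc: "vrefl M i (sc t x) = sc t (vrefl M i x)"
  using ip_sc[of "M i" t x] by (auto simp: vrefl_def sc_def fun_eq_iff algebra_simps)

lemma vrefl_ad: "vrefl M i (ad x y) = ad (vrefl M i x) (vrefl M i y)"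
  using ip_ad[of "M i" x y] by (auto simp: vrefl_def ad_def fun_eq_iff algebra_simps)

lemma vact_sc: "vact M w (sc t x) = sc t (vact M w x)"
  by (induction w) (auto simp: vrefl_sc)

lemma vact_ad: "vact M w (ad x y) = ad (vact M w x) (vact M w y)"
  by (induction w) (auto simp: vrefl_ad)

lemma vact_append: "vact M (u @ v) x = vact M u (vact M v x)"
  by (induction u) auto

lemma ip_vrefl_self:
  fixes M :: "'i::finite \<Rightarrow> 'i \<Rightarrow> real"
  shows "ip (M i) (vrefl M i x) = ip (M i) x - M i i * ip (M i) x"
proof -
  have "ip (M i) (vrefl M i x) = (\<Sum>k\<in>UNIV. M i k * x k - (if k = i then M i i * ip (M i) x else 0))"
    unfolding ip_def vrefl_def by (rule sum.cong) (auto simp: algebra_simps)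
  also have "\<dots> = ip (M i) x - M i i * ip (M i) x"
    by (simp add: sum_subtractf ip_def)
  finally show ?thesis .
qed

lemma vrefl_vrefl:
  fixes M :: "'i::finite \<Rightarrow> 'i \<Rightarrow> real"
  assumes "M i i = 2"
  shows "vrefl M i (vrefl M i x) = x"
proof -
  have h: "ip (M i) (vrefl M i x) = - ip (M i) x" using ip_vrefl_self[of M i x] assms by simp
  show ?thesis unfolding vrefl_def[of M i "vrefl M i x"] h by (simp add: vrefl_def fun_eq_iff)
qed

lemma vact_rev_cancel:
  fixes M :: "'i::finite \<Rightarrow> 'i \<Rightarrow> real"
  assumes "\<And>i. M i i = 2"
  shows "vact M (rev w) (vact M w x) = x"
  by (induction w arbitrary: x) (auto simp: vact_append vrefl_vrefl assms)

lemma vact_rev_cancel2: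
  fixes M :: "'i::finite \<Rightarrow> 'i \<Rightarrow> real"
  assumes "\<And>i. M i i = 2"
  shows "vact M w (vact M (rev w) x) = x"
  using vact_rev_cancel[where M=M and w="rev w" and x=x] assms by simp

lemma ip_dual_refl:
  fixes M :: "'i::finite \<Rightarrow> 'i \<Rightarrow> real"
  shows "ip (dual_refl M i l) x = ip l (vrefl M i x)"
proof -
  have "ip (dual_refl M i l) x = (\<Sum>k\<in>UNIV. l k * x k - l i * (M i k * x k))"
    unfolding ip_def dual_refl_def by (rule sum.cong) (auto simp: algebra_simps)
  also have "\<dots> = (\<Sum>k\<in>UNIV. l k * x k) - l i * ip (M i) x"
    by (simp add: sum_subtractf ip_def sum_distrib_left)
  also have "\<dots> = ip l (vrefl M i x)"
  proof -
    have "ip l (vrefl M i x) = (\<Sum>k\<in>UNIV. l k * x k - (if k = i then l i * ip (M i) x else 0))"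
      unfolding ip_def vrefl_def by (rule sum.cong) (auto simp: algebra_simps)
    then show ?thesis by (simp add: sum_subtractf)
  qed
  finally show ?thesis .
qed

lemma ip_word_act:
  fixes M :: "'i::finite \<Rightarrow> 'i \<Rightarrow> real"
  shows "ip (word_act M w l) x = ip l (vact M (rev w) x)"
  by (induction w arbitrary: x) (auto simp: ip_dual_refl vact_append)

lemma word_act_zero: "word_act M w (\<lambda>_. 0) = (\<lambda>_. 0)"
  by (induction w) (auto simp: dual_refl_def)



lemma cox_eq_cong: "cox_eq M u v \<Longrightarrow> cox_eq M (p @ u @ q) (p @ v @ q)"
proof (induction rule: cox_eq.induct)
  case (refl u) then show ?case by (rule cox_eq.refl)
next
  case (sym u v) then show ?case by (metis cox_eq.sym)
next
  case (trans u v w) then show ?case by (metis cox_eq.trans)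
next
  case (rel r u v)
  have "cox_eq M ((p @ u) @ r @ (v @ q)) ((p @ u) @ (v @ q))" by (rule cox_eq.rel[OF rel])
  then show ?case by simp
qed

lemma cox_eq_congL: "cox_eq M u v \<Longrightarrow> cox_eq M (u @ q) (v @ q)"
  using cox_eq_cong[of M u v "[]" q] by simp

lemma cox_eq_congR: "cox_eq M u v \<Longrightarrow> cox_eq M (p @ u) (p @ v)"
  using cox_eq_cong[of M u v p "[]"] by simp

lemma cox_eq_app: "cox_eq M u u' \<Longrightarrow> cox_eq M v v' \<Longrightarrow> cox_eq M (u @ v) (u' @ v')"
  by (meson cox_eq.trans cox_eq_congL cox_eq_congR)

lemma cox_eq_cancel2: "cox_eq M (p @ [i, i] @ q) (p @ q)"
  by (rule cox_eq.rel) (rule cox_relator.inv)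

lemma length_concat_replicate: "length (concat (replicate k [i, j])) = 2 * k"
  by (induction k) auto

lemma cox_relator_even: "cox_relator M r \<Longrightarrow> even (length r)"
  by (induction rule: cox_relator.induct) (auto simp: length_concat_replicate)

lemma cox_eq_parity: "cox_eq M u v \<Longrightarrow> even (length u) = even (length v)"
  by (induction rule: cox_eq.induct) (auto dest: cox_relator_even)

lemma cox_relator_rev: "cox_relator M r \<Longrightarrow> cox_relator M (rev r)"
proof (induction rule: cox_relator.induct)
  case (inv i) then show ?case by (simp add: cox_relator.inv)
next
  case (braid i j k)
  have "rev (concat (replicate k [i, j])) = concat (replicate k [j, i])"
    by (simp add: rev_concat)
  moreover have "cox_relator M (concat (replicate k [j, i]))"
    using braid by (intro cox_relator.braid) (auto simp: mult.commute)
  ultimately show ?case by simp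
qed

lemma cox_eq_rev: "cox_eq M u v \<Longrightarrow> cox_eq M (rev u) (rev v)"
proof (induction rule: cox_eq.induct)
  case (refl u) then show ?case by (rule cox_eq.refl)
next
  case (sym u v) then show ?case by (metis cox_eq.sym)
next
  case (trans u v w) then show ?case by (metis cox_eq.trans)
next
  case (rel r u v)
  have "cox_eq M (rev v @ rev r @ rev u) (rev v @ rev u)"
    by (rule cox_eq.rel[OF cox_relator_rev[OF rel]])
  then show ?case by simp
qed

lemma cox_eq_rev_cancel: "cox_eq M (rev w @ w) []"
proof (induction w)
  case Nil then show ?case by (simp add: cox_eq.refl)
next
  case (Cons a w)
  have "cox_eq M (rev w @ [a, a] @ w) (rev w @ w)" by (rule cox_eq_cancel2)
  then show ?case using Cons by (auto intro: cox_eq.trans)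
qed

definition clen :: "('i \<Rightarrow> 'i \<Rightarrow> real) \<Rightarrow> 'i list \<Rightarrow> nat" where
  "clen M w = (LEAST n. \<exists>v. cox_eq M w v \<and> length v = n)"

lemma clen_ex: "\<exists>v. cox_eq M w v \<and> length v = clen M w"
  unfolding clen_def by (rule LeastI_ex) (auto intro: cox_eq.refl)

lemma clen_le: "cox_eq M w v \<Longrightarrow> clen M w \<le> length v"
  unfolding clen_def by (rule Least_le) auto

lemma clen_le_length: "clen M w \<le> length w"
  by (rule clen_le) (rule cox_eq.refl)

lemma clen_cong: "cox_eq M w w' \<Longrightarrow> clen M w = clen M w'"
proof -
  assume h: "cox_eq M w w'"
  obtain v where v: "cox_eq M w v" "length v = clen M w" using clen_ex by blast
  obtain v' where v': "cox_eq M w' v'" "length v' = clen M w'" using clen_ex by blast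
  have "clen M w \<le> clen M w'" using clen_le[of M w v'] h v' by (metis cox_eq.trans)
  moreover have "clen M w' \<le> clen M w" using clen_le[of M w' v] h v by (metis cox_eq.trans cox_eq.sym)
  ultimately show ?thesis by simp
qed

lemma clen_append: "clen M (u @ v) \<le> clen M u + clen M v"
proof -
  obtain u' where u': "cox_eq M u u'" "length u' = clen M u" using clen_ex by blast
  obtain v' where v': "cox_eq M v v'" "length v' = clen M v" using clen_ex by blast
  have "cox_eq M (u @ v) (u' @ v')" by (rule cox_eq_app[OF u'(1) v'(1)])
  then show ?thesis using clen_le u' v' by fastforce
qed

lemma clen_parity: "even (clen M w) = even (length w)"
proof -
  obtain v where v: "cox_eq M w v" "length v = clen M w" using clen_ex by blast
  show ?thesis using cox_eq_parity[OF v(1)] v(2) by simp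
qed

lemma clen_single: "clen M [i] \<le> 1"
  using clen_le_length[of M "[i]"] by simp

lemma clen_snoc: "clen M (w @ [i]) = Suc (clen M w) \<or> clen M w = Suc (clen M (w @ [i]))"
proof -
  have a: "clen M (w @ [i]) \<le> clen M w + 1" using clen_append[of M w "[i]"] clen_single[of M i] by simp
  have "cox_eq M (w @ [i, i] @ []) (w @ [])" by (rule cox_eq_cancel2)
  then have "clen M w = clen M ((w @ [i]) @ [i])" using clen_cong by (metis append.assoc append_Cons append_Nil append_Nil2)
  also have "\<dots> \<le> clen M (w @ [i]) + 1" using clen_append[of M "w @ [i]" "[i]"] clen_single[of M i] by simp
  finally have b: "clen M w \<le> clen M (w @ [i]) + 1" .
  have "even (clen M (w @ [i])) \<noteq> even (clen M w)" using clen_parity[of M w] clen_parity[of M "w @ [i]"] by simp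
  moreover have "\<And>a b::nat. a \<le> b+1 \<Longrightarrow> b \<le> a+1 \<Longrightarrow> even a \<noteq> even b \<Longrightarrow> a = Suc b \<or> b = Suc a" by presburger
  ultimately show ?thesis using a b by blast
qed

definition reduced :: "('i \<Rightarrow> 'i \<Rightarrow> real) \<Rightarrow> 'i list \<Rightarrow> bool" where
  "reduced M w \<longleftrightarrow> clen M w = length w"

lemma reduced_snocD: "reduced M (w @ [i]) \<Longrightarrow> reduced M w \<and> clen M w < clen M (w @ [i])"
  using clen_snoc[of M w i] clen_le_length[of M w] unfolding reduced_def by auto

lemma reduced_ConsD: "reduced M (x # w) \<Longrightarrow> reduced M w"
  using clen_append[of M "[x]" w] clen_single[of M x] clen_le_length[of M w] unfolding reduced_def by auto

lemma reduced_rev: "reduced M (rev w) = reduced M w"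
proof -
  have "clen M (rev w) = clen M w" for w :: "'a list"
  proof -
    obtain v where v: "cox_eq M w v" "length v = clen M w" using clen_ex by blast
    obtain v' where v': "cox_eq M (rev w) v'" "length v' = clen M (rev w)" using clen_ex by blast
    have "clen M (rev w) \<le> clen M w" using clen_le[OF cox_eq_rev[OF v(1)]] v(2) by simp
    moreover have "clen M w \<le> clen M (rev w)" using clen_le[OF cox_eq_rev[OF v'(1)]] v'(2) by simp
    ultimately show ?thesis by simp
  qed
  then show ?thesis unfolding reduced_def by simp
qed

lemma reduced_no_double: "reduced M (x # x # w) \<Longrightarrow> False"
proof -
  assume r: "reduced M (x # x # w)"
  have "cox_eq M ([] @ [x, x] @ w) ([] @ w)" by (rule cox_eq_cancel2)
  then have "clen M (x # x # w) \<le> length w" using clen_le by fastforce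
  then show False using r unfolding reduced_def by simp
qed

fun alt :: "'i \<Rightarrow> 'i \<Rightarrow> nat \<Rightarrow> 'i list" where
  "alt x y 0 = []"
| "alt x y (Suc n) = x # alt y x n"

lemma length_alt[simp]: "length (alt x y n) = n"
  by (induction n arbitrary: x y) auto

lemma alt_snoc: "alt x y (Suc n) = alt x y n @ [if even n then x else y]"
  by (induction n arbitrary: x y) auto

lemma alt_add: "alt x y (n + k) = alt x y n @ (if even n then alt x y k else alt y x k)"
  by (induction n arbitrary: x y) auto

lemma rev_alt: "rev (alt x y n) = (if even n then alt y x n else alt x y n)"
proof (induction n arbitrary: x y)
  case 0 then show ?case by simp
next
  case (Suc n)
  have l: "rev (alt x y (Suc n)) = rev (alt y x n) @ [x]" by simp
  show ?case
  proof (cases "even n")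
    case True
    then show ?thesis unfolding l Suc.IH using alt_snoc[of x y n] by simp
  next
    case False
    then show ?thesis unfolding l Suc.IH using alt_snoc[of y x n] by simp
  qed
qed

lemma concat_rep_alt: "concat (replicate m [x, y]) = alt x y (2 * m)"
  by (induction m) auto

lemma set_alt: "set (alt x y n) \<subseteq> {x, y}"
  by (induction n arbitrary: x y) auto

lemma noadj_alt: "x \<noteq> y \<Longrightarrow> set w \<subseteq> {x, y} \<Longrightarrow> (\<And>p q z. x # w \<noteq> p @ [z, z] @ q) \<Longrightarrow> x # w = alt x y (Suc (length w))"
proof (induction w arbitrary: x y)
  case Nil then show ?case by simp
next
  case (Cons a w)
  have ay: "a = y" using Cons.prems(1,2) Cons.prems(3)[of "[]" x w] by auto
  have "a # w = alt a x (Suc (length w))"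
  proof (rule Cons.IH)
    show "a \<noteq> x" using ay Cons.prems by simp
    show "set w \<subseteq> {a, x}" using ay Cons.prems by auto
    show "a # w \<noteq> p @ [z, z] @ q" for p q z using Cons.prems(3)[of "x # p" z q] by auto
  qed
  then show ?case using ay by simp
qed



fun Useq :: "real \<Rightarrow> nat \<Rightarrow> real" where
  "Useq t 0 = 0"
| "Useq t (Suc 0) = 1"
| "Useq t (Suc (Suc n)) = t * Useq t (Suc n) - Useq t n"

lemma Useq_sin: "Useq (2 * cos f) n * sin f = sin (real n * f)"
proof (induction "2 * cos f" n rule: Useq.induct)
  case 1 then show ?case by simp
next
  case 2 then show ?case by simp
next
  case (3 n)
  have e1: "real (Suc (Suc n)) * f = real (Suc n) * f + f" by (simp add: algebra_simps)
  have e2: "real n * f = real (Suc n) * f - f" by (simp add: algebra_simps)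
  have "Useq (2 * cos f) (Suc (Suc n)) * sin f
      = 2 * cos f * (Useq (2 * cos f) (Suc n) * sin f) - Useq (2 * cos f) n * sin f"
    by (simp add: algebra_simps)
  also have "\<dots> = 2 * cos f * sin (real (Suc n) * f) - sin (real n * f)" using 3 by simp
  also have "\<dots> = sin (real (Suc (Suc n)) * f)"
    unfolding e1 e2 sin_add sin_diff by (simp add: algebra_simps)
  finally show ?case .
qed

definition sp :: "'i \<Rightarrow> 'i \<Rightarrow> real \<Rightarrow> real \<Rightarrow> 'i \<Rightarrow> real" where
  "sp i j x y = (\<lambda>l. if l = i then x else if l = j then y else 0)"

lemma ip_sp:
  fixes f :: "'i::finite \<Rightarrow> real"
  assumes "i \<noteq> j"
  shows "ip f (sp i j x y) = f i * x + f j * y"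
proof -
  have "ip f (sp i j x y) = (\<Sum>l\<in>UNIV. (if l = i then f i * x else 0) + (if l = j then f j * y else 0))"
    unfolding ip_def sp_def by (rule sum.cong) (use assms in auto)
  also have "\<dots> = f i * x + f j * y" by (simp add: sum.distrib)
  finally show ?thesis .
qed

lemma vrefl_sp_i:
  fixes M :: "'i::finite \<Rightarrow> 'i \<Rightarrow> real"
  assumes "i \<noteq> j" "M i i = 2"
  shows "vrefl M i (sp i j x y) = sp i j (- x - M i j * y) y"
proof -
  have "ip (M i) (sp i j x y) = M i i * x + M i j * y" by (rule ip_sp[OF assms(1)])
  then show ?thesis using assms by (auto simp: vrefl_def sp_def fun_eq_iff)
qed

lemma vrefl_sp_j:
  fixes M :: "'i::finite \<Rightarrow> 'i \<Rightarrow> real"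
  assumes "i \<noteq> j" "M j j = 2"
  shows "vrefl M j (sp i j x y) = sp i j x (- y - M j i * x)"
proof -
  have "ip (M j) (sp i j x y) = M j i * x + M j j * y" by (rule ip_sp[OF assms(1)])
  then show ?thesis using assms by (auto simp: vrefl_def sp_def fun_eq_iff)
qed

definition Lf :: "real \<Rightarrow> real \<Rightarrow> real \<times> real \<Rightarrow> real \<times> real" where
  "Lf c d z = ((c * d - 1) * fst z + c * snd z, - d * fst z - snd z)"

lemma Lf_iter: "(Lf c d ^^ Suc n) z =
   (Useq (c * d - 2) (Suc n) * fst (Lf c d z) - Useq (c * d - 2) n * fst z,
    Useq (c * d - 2) (Suc n) * snd (Lf c d z) - Useq (c * d - 2) n * snd z)"
proof (induction n)
  case 0 then show ?case by simp
next
  case (Suc n)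
  let ?U = "Useq (c * d - 2)"
  have "(Lf c d ^^ Suc (Suc n)) z = Lf c d ((Lf c d ^^ Suc n) z)" by simp
  also have "\<dots> = (?U (Suc (Suc n)) * fst (Lf c d z) - ?U (Suc n) * fst z,
    ?U (Suc (Suc n)) * snd (Lf c d z) - ?U (Suc n) * snd z)"
    unfolding Suc by (simp add: Lf_def) (simp add: algebra_simps)
  finally show ?case .
qed

lemma vact_fixed: "(\<And>l. l \<in> set w \<Longrightarrow> vrefl M l q = q) \<Longrightarrow> vact M w q = q"
  by (induction w) auto

lemma vact_rep: "vact M (concat (replicate n [i, j])) x = (vact M [i, j] ^^ n) x"
  by (induction n) (auto simp: vact_append)

lemma vact_rep_sp:
  fixes M :: "'i::finite \<Rightarrow> 'i \<Rightarrow> real"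
  assumes "i \<noteq> j" "M i i = 2" "M j j = 2"
  shows "(vact M [i, j] ^^ n) (sp i j x y) = sp i j (fst ((Lf (M i j) (M j i) ^^ n) (x, y))) (snd ((Lf (M i j) (M j i) ^^ n) (x, y)))"
proof (induction n)
  case 0 then show ?case by simp
next
  case (Suc n)
  have "(vact M [i, j] ^^ Suc n) (sp i j x y) = vact M [i, j] ((vact M [i, j] ^^ n) (sp i j x y))" by simp
  also have "\<dots> = vrefl M i (vrefl M j (sp i j (fst ((Lf (M i j) (M j i) ^^ n) (x, y))) (snd ((Lf (M i j) (M j i) ^^ n) (x, y)))))"
    unfolding Suc by simp
  also have "\<dots> = sp i j (fst ((Lf (M i j) (M j i) ^^ Suc n) (x, y))) (snd ((Lf (M i j) (M j i) ^^ Suc n) (x, y)))"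
    unfolding vrefl_sp_j[of i j M, OF assms(1,3)] vrefl_sp_i[of i j M, OF assms(1,2)] by (simp add: Lf_def) (rule arg_cong2[where f="sp i j"]; simp add: algebra_simps)
  finally show ?case .
qed

lemma braid_acts_trivially:
  fixes M :: "'i::finite \<Rightarrow> 'i \<Rightarrow> real"
  assumes "i \<noteq> j" "M i i = 2" "M j j = 2" "2 \<le> k"
    and p: "M i j * M j i = 4 * (cos (pi / real k))\<^sup>2"
    and z: "M i j = 0 \<longleftrightarrow> M j i = 0"
  shows "vact M (concat (replicate k [i, j])) x = x"
proof -
  let ?L = "Lf (M i j) (M j i)"
  have Lk: "(?L ^^ k) z = z" for z
  proof (cases "k = 2")
    case True
    then have "cos (pi / real k) = 0" by simp
    then have "M i j = 0 \<and> M j i = 0" using p z by simp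
    then show ?thesis using True by (simp add: Lf_def numeral_2_eq_2)
  next
    case False
    then have k3: "3 \<le> k" using assms(4) by simp
    define f where "f = 2 * pi / real k"
    have f0: "0 < f" "f < pi" unfolding f_def using k3 by (auto simp: field_simps)
    then have sf: "sin f > 0" by (rule sin_gt_zero)
    have tau: "M i j * M j i - 2 = 2 * cos f"
      unfolding p f_def using cos_double_cos[of "pi / real k"] by (simp add: field_simps)
    have Uk: "Useq (2 * cos f) k = 0"
    proof -
      have "Useq (2 * cos f) k * sin f = sin (real k * f)" by (rule Useq_sin)
      also have "real k * f = 2 * pi" unfolding f_def using k3 by simp
      finally show ?thesis using sf by simp
    qed
    have Uk1: "Useq (2 * cos f) (k - 1) = -1"
    proof -
      have "Useq (2 * cos f) (k - 1) * sin f = sin (real (k - 1) * f)" by (rule Useq_sin)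
      also have "real (k - 1) * f = 2 * pi - f" unfolding f_def using k3 by (simp add: of_nat_diff field_simps)
      finally have "Useq (2 * cos f) (k - 1) * sin f = - sin f" by simp
      then show ?thesis using sf by (metis mult_minus_left mult_right_cancel mult_1 less_irrefl)
    qed
    have ke: "k = Suc (k - 1)" using k3 by simp
    have "(?L ^^ Suc (k - 1)) z = z"
      unfolding Lf_iter tau using Uk Uk1 ke[symmetric] by simp
    then show ?thesis using ke by metis
  qed
  define A where "A = ip (M i) x"
  define B where "B = ip (M j) x"
  define D where "D = 4 - M i j * M j i"
  have D0: "D > 0"
  proof -
    have "0 < pi / real k" "pi / real k < pi" using assms(4) by (auto simp: field_simps)
    then have "sin (pi / real k) > 0" by (rule sin_gt_zero)
    then have "(cos (pi / real k))\<^sup>2 < 1" using sin_cos_squared_add[of "pi / real k"]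
      by (smt (verit) zero_less_power)
    then show ?thesis unfolding D_def p by simp
  qed
  define x0 where "x0 = (2 * A - M i j * B) / D"
  define y0 where "y0 = (2 * B - M j i * A) / D"
  define q where "q = (\<lambda>l. x l - sp i j x0 y0 l)"
  have xq: "x = ad q (sp i j x0 y0)" unfolding q_def ad_def by simp
  have x0D: "x0 * D = 2 * A - M i j * B" unfolding x0_def using D0 by simp
  have y0D: "y0 * D = 2 * B - M j i * A" unfolding y0_def using D0 by simp
  have "(2 * x0 + M i j * y0) * D = A * D" using x0D y0D unfolding D_def by algebra
  then have e1: "2 * x0 + M i j * y0 = A" using D0 by simp
  have "(M j i * x0 + 2 * y0) * D = B * D" using x0D y0D unfolding D_def by algebra
  then have e2: "M j i * x0 + 2 * y0 = B" using D0 by simp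
  have "ip (M i) q = A - ip (M i) (sp i j x0 y0)"
    unfolding q_def A_def ip_def by (simp add: sum_subtractf algebra_simps)
  also have "\<dots> = 0" using assms(1,2) e1 unfolding ip_sp[OF assms(1)] by simp
  finally have qi: "ip (M i) q = 0" .
  have "ip (M j) q = B - ip (M j) (sp i j x0 y0)"
    unfolding q_def B_def ip_def by (simp add: sum_subtractf algebra_simps)
  also have "\<dots> = 0" using assms(1,3) e2 unfolding ip_sp[OF assms(1)] by simp
  finally have qj: "ip (M j) q = 0" .
  have fq: "vact M (concat (replicate k [i, j])) q = q"
    by (rule vact_fixed) (use qi qj in \<open>auto simp: vrefl_def fun_eq_iff split: if_splits\<close>)
  have fp: "vact M (concat (replicate k [i, j])) (sp i j x0 y0) = sp i j x0 y0"
    unfolding vact_rep vact_rep_sp[where M=M and i=i and j=j, OF assms(1,2,3)] Lk by simp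
  show ?thesis by (subst (1 2) xq) (simp only: vact_ad fq fp)
qed



lemma egcm_diag: "egcm M \<Longrightarrow> M i i = 2" unfolding egcm_def by blast
lemma egcm_zero: "egcm M \<Longrightarrow> M i j = 0 \<longleftrightarrow> M j i = 0" unfolding egcm_def by blast
lemma egcm_neg: "egcm M \<Longrightarrow> i \<noteq> j \<Longrightarrow> M i j \<le> 0" unfolding egcm_def by blast

lemma egcm_cases:
  assumes "egcm M" "i \<noteq> j"
  shows "M i j * M j i \<ge> 4 \<or> (\<exists>m::nat. m \<ge> 2 \<and> M i j * M j i = 4 * (cos (pi / real m))\<^sup>2)"
proof (cases "M i j * M j i = 0")
  case True
  then show ?thesis by (intro disjI2 exI[of _ 2]) simp
next
  case False
  then have "M i j * M j i \<ge> 4 \<or> (\<exists>m::nat. m \<ge> 3 \<and> M i j * M j i = 4 * (cos (pi / real m))\<^sup>2)"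
    using assms unfolding egcm_def by blast
  then show ?thesis by (metis Suc_leD numeral_3_eq_3 numeral_2_eq_2)
qed

lemma cox_relator_trivial:
  fixes M :: "'i::finite \<Rightarrow> 'i \<Rightarrow> real"
  assumes "egcm M"
  shows "cox_relator M r \<Longrightarrow> vact M r x = x"
proof (induction rule: cox_relator.induct)
  case (inv i)
  have "M i i = 2" by (rule egcm_diag[OF assms])
  then show ?case by (simp add: vrefl_vrefl)
next
  case (braid i j k)
  then show ?case using braid_acts_trivially[of i j M k x] egcm_diag[OF assms] egcm_zero[OF assms] by blast
qed

lemma cox_eq_vact:
  fixes M :: "'i::finite \<Rightarrow> 'i \<Rightarrow> real"
  assumes "egcm M"
  shows "cox_eq M u v \<Longrightarrow> vact M u x = vact M v x"
proof (induction arbitrary: x rule: cox_eq.induct)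
  case (rel r u v)
  then show ?case using cox_relator_trivial[OF assms rel] by (simp add: vact_append)
qed auto

lemma Useq_mono: "2 \<le> c \<Longrightarrow> 0 \<le> Useq c n \<and> Useq c n \<le> Useq c (Suc n)"
proof (induction n)
  case 0 then show ?case by simp
next
  case (Suc n)
  then have h: "0 \<le> Useq c n" "Useq c n \<le> Useq c (Suc n)" by auto
  have "2 * Useq c (Suc n) \<le> c * Useq c (Suc n)" using h Suc.prems by (intro mult_right_mono) auto
  then show ?case using h by simp
qed

lemma Useq_nonneg_cos:
  assumes "2 \<le> m" "t \<le> m"
  shows "0 \<le> Useq (2 * cos (pi / real m)) t"
proof -
  have m0: "0 < real m" using assms by simp
  have s: "sin (pi / real m) > 0" using assms by (intro sin_gt_zero) (auto simp: field_simps)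
  have "0 \<le> sin (real t * (pi / real m))"
    using assms m0 by (intro sin_ge_zero) (auto simp: field_simps)
  then have "0 \<le> Useq (2 * cos (pi / real m)) t * sin (pi / real m)" using Useq_sin by metis
  then show ?thesis using s by (simp add: zero_le_mult_iff)
qed

lemma uvec_sp: "i \<noteq> j \<Longrightarrow> uvec i = sp i j 1 0"
  by (auto simp: uvec_def sp_def)

lemma rev_alt_Suc: "rev (alt x y (Suc n)) = (if even n then x else y) # rev (alt x y n)"
  using alt_snoc[of x y n] by simp

lemma dihedral_formula:
  fixes M :: "'i::finite \<Rightarrow> 'i \<Rightarrow> real"
  assumes "egcm M" "i \<noteq> j" "c > 0" "c * c = M i j * M j i"
  shows "vact M (rev (alt j i n)) (uvec i) =
    (if even n then sp i j (Useq c (Suc n)) ((- M j i / c) * Useq c n)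
     else sp i j (Useq c n) ((- M j i / c) * Useq c (Suc n)))"
proof (induction n)
  case 0 then show ?case using uvec_sp[OF assms(2)] by simp
next
  case (Suc n)
  have dj: "M j j = 2" and di: "M i i = 2" using egcm_diag[OF assms(1)] by auto
  show ?case
  proof (cases "even n")
    case True
    have "vact M (rev (alt j i (Suc n))) (uvec i) = vrefl M j (vact M (rev (alt j i n)) (uvec i))"
      using True by (simp only: rev_alt_Suc) simp
    also have "\<dots> = sp i j (Useq c (Suc n)) (- ((- M j i / c) * Useq c n) - M j i * Useq c (Suc n))"
      using True Suc.IH vrefl_sp_j[of i j M, OF assms(2) dj] by simp
    also have "\<dots> = sp i j (Useq c (Suc n)) ((- M j i / c) * Useq c (Suc (Suc n)))"
      using assms(3) by (intro arg_cong2[where f="sp i j"]) (simp_all add: field_simps)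
    finally show ?thesis using True by simp
  next
    case False
    have "vact M (rev (alt j i (Suc n))) (uvec i) = vrefl M i (vact M (rev (alt j i n)) (uvec i))"
      using False by (simp only: rev_alt_Suc) simp
    also have "\<dots> = sp i j (- Useq c n - M i j * ((- M j i / c) * Useq c (Suc n))) ((- M j i / c) * Useq c (Suc n))"
      using False Suc.IH vrefl_sp_i[of i j M, OF assms(2) di] by simp
    also have "- Useq c n - M i j * ((- M j i / c) * Useq c (Suc n)) = Useq c (Suc (Suc n))"
    proof -
      have "M i j * (M j i / c) = c" using assms(3,4) by (simp add: field_simps)
      then have "M i j * (M j i * Useq c (Suc n)) / c = c * Useq c (Suc n)"
        by (metis mult.assoc times_divide_eq_left mult.commute)
      then show ?thesis by (simp add: algebra_simps)
    qed
    finally show ?thesis using False by simp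
  qed
qed



lemma dihedral_pos:
  fixes M :: "'i::finite \<Rightarrow> 'i \<Rightarrow> real"
  assumes "egcm M" "i \<noteq> j"
    and bd: "M i j * M j i \<ge> 4 \<or> (\<exists>m::nat. m \<ge> 2 \<and> M i j * M j i = 4 * (cos (pi / real m))\<^sup>2 \<and> n < m)"
  shows "\<exists>P Q. P \<ge> 0 \<and> Q \<ge> 0 \<and> vact M (rev (alt j i n)) (uvec i) = sp i j P Q"
proof -
  have a: "M i j \<le> 0" and b: "M j i \<le> 0" using egcm_neg[OF assms(1)] assms(2) by auto
  have dj: "M j j = 2" and di: "M i i = 2" using egcm_diag[OF assms(1)] by auto
  show ?thesis
  proof (cases "M j i = 0")
    case True
    then have "M i j = 0" using egcm_zero[OF assms(1)] by blast
    with True bd obtain m :: nat where m: "m \<ge> 2" "cos (pi / real m) = 0" "n < m" by auto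
    have "m \<le> 2"
    proof (rule ccontr)
      assume "\<not> m \<le> 2"
      then have "0 < pi / real m" "pi / real m < pi / 2" by (auto simp: field_simps)
      then have "cos (pi / real m) > 0" by (intro cos_gt_zero) auto
      then show False using m by simp
    qed
    then have "n = 0 \<or> n = 1" using m by auto
    then show ?thesis
    proof
      assume "n = 0" then show ?thesis using uvec_sp[OF assms(2)] by (intro exI[of _ 1] exI[of _ 0]) simp
    next
      assume "n = 1"
      then have "vact M (rev (alt j i n)) (uvec i) = vrefl M j (sp i j 1 0)" using uvec_sp[OF assms(2)] by simp
      also have "\<dots> = sp i j 1 0" using vrefl_sp_j[of i j M, OF assms(2) dj] True by simp
      finally show ?thesis by (intro exI[of _ 1] exI[of _ 0]) simp
    qed
  next
    case False
    then have bn: "M j i < 0" using b by simp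
    then have an: "M i j < 0" using a egcm_zero[OF assms(1), of i j] by linarith
    define c where "c = sqrt (M i j * M j i)"
    have pp: "M i j * M j i > 0" using an bn by (simp add: mult_neg_neg)
    have c0: "c > 0" unfolding c_def using pp by simp
    have cc: "c * c = M i j * M j i" unfolding c_def using pp by simp
    have U: "\<And>t. t \<le> Suc n \<Longrightarrow> 0 \<le> Useq c t"
    proof -
      fix t assume t: "t \<le> Suc n"
      show "0 \<le> Useq c t"
      proof (cases "M i j * M j i \<ge> 4")
        case True
        then have "2 \<le> c" unfolding c_def using real_sqrt_le_mono[OF True] by simp
        then show ?thesis using Useq_mono by blast
      next
        case False
        with bd obtain m :: nat where m: "m \<ge> 2" "M i j * M j i = 4 * (cos (pi / real m))\<^sup>2" "n < m" by auto
        have "0 < pi / real m" "pi / real m \<le> pi / 2" using m(1) by (auto simp: field_simps)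
        then have "0 \<le> cos (pi / real m)" by (intro cos_ge_zero) auto
        then have "c = 2 * cos (pi / real m)" unfolding c_def m(2)
          by (simp add: real_sqrt_mult)
        then show ?thesis using Useq_nonneg_cos[of m t] m t by simp
      qed
    qed
    have k: "- M j i / c \<ge> 0" using bn c0 by (simp add: divide_nonpos_pos)
    show ?thesis
    proof (cases "even n")
      case True
      have e: "vact M (rev (alt j i n)) (uvec i) = sp i j (Useq c (Suc n)) ((- M j i / c) * Useq c n)"
        using dihedral_formula[OF assms(1,2) c0 cc, of n] True by simp
      have "0 \<le> (- M j i / c) * Useq c n" using k U[of n] by (intro mult_nonneg_nonneg) auto
      moreover have "0 \<le> Useq c (Suc n)" using U[of "Suc n"] by simp
      ultimately show ?thesis using e by (intro exI[of _ "Useq c (Suc n)"] exI[of _ "(- M j i / c) * Useq c n"]) simp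
    next
      case False
      have e: "vact M (rev (alt j i n)) (uvec i) = sp i j (Useq c n) ((- M j i / c) * Useq c (Suc n))"
        using dihedral_formula[OF assms(1,2) c0 cc, of n] False by simp
      have "0 \<le> (- M j i / c) * Useq c (Suc n)" using k U[of "Suc n"] by (intro mult_nonneg_nonneg) auto
      moreover have "0 \<le> Useq c n" using U[of n] by simp
      ultimately show ?thesis using e by (intro exI[of _ "Useq c n"] exI[of _ "(- M j i / c) * Useq c (Suc n)"]) simp
    qed
  qed
qed



lemma braid_swap:
  assumes "cox_relator M (concat (replicate m [x, y]))"
  shows "cox_eq M (alt x y m) (alt y x m)"
proof -
  have "cox_eq M ([] @ concat (replicate m [x, y]) @ []) ([] @ [])" by (rule cox_eq.rel[OF assms])
  moreover have "concat (replicate m [x, y]) = alt x y m @ rev (alt y x m)"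
    unfolding concat_rep_alt mult_2 alt_add rev_alt by simp
  ultimately have h: "cox_eq M (alt x y m @ rev (alt y x m)) []" by simp
  have "cox_eq M (alt x y m) (alt x y m @ (rev (alt y x m) @ alt y x m))"
    using cox_eq_congR[OF cox_eq_rev_cancel[of M "alt y x m"], of "alt x y m"] by (simp add: cox_eq.sym)
  also have "cox_eq M ((alt x y m @ rev (alt y x m)) @ alt y x m) ([] @ alt y x m)"
    by (rule cox_eq_congL[OF h])
  ultimately show ?thesis by (auto intro: cox_eq.trans)
qed

lemma alt_shorten:
  assumes "cox_relator M (concat (replicate m [q, p]))" "1 \<le> m"
  shows "cox_eq M (alt p q (Suc m)) (alt q p (m - 1))"
proof -
  have "cox_eq M (alt p q (Suc m)) ([p] @ alt p q m)"
    using cox_eq_congR[OF braid_swap[OF assms(1)], of "[p]"] by simp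
  also have "alt p q m = p # alt q p (m - 1)" using assms(2) by (cases m) auto
  finally have "cox_eq M (alt p q (Suc m)) ([] @ [p, p] @ alt q p (m - 1))" by simp
  then show ?thesis using cox_eq_cancel2[of M "[]" p "alt q p (m - 1)"] by (auto intro: cox_eq.trans)
qed

lemma reduced_alt_bound:
  assumes "cox_relator M (concat (replicate m [x, y]))" "cox_relator M (concat (replicate m [y, x]))"
    "1 \<le> m" "reduced M (alt x y N)"
  shows "N \<le> m"
proof (rule ccontr)
  assume "\<not> N \<le> m"
  then obtain d where d: "N = d + Suc m" by (metis add.commute le_Suc_ex not_less_eq_eq)
  obtain p q where pq: "alt x y N = alt x y d @ alt p q (Suc m)" and
    rel: "cox_relator M (concat (replicate m [q, p]))"
    using assms(1,2) unfolding d alt_add by (cases "even d") auto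
  have "cox_eq M (alt x y N) (alt x y d @ alt q p (m - 1))"
    unfolding pq by (rule cox_eq_congR[OF alt_shorten[OF rel assms(3)]])
  then have "clen M (alt x y N) \<le> d + (m - 1)" using clen_le by fastforce
  then show False using assms(4) d unfolding reduced_def by simp
qed

lemma reduced_no_double2: "reduced M (p @ [z, z] @ q) \<Longrightarrow> False"
proof -
  assume r: "reduced M (p @ [z, z] @ q)"
  have "clen M (p @ [z, z] @ q) \<le> length (p @ q)" by (rule clen_le[OF cox_eq_cancel2])
  then show False using r unfolding reduced_def by simp
qed

lemma J_shape:
  fixes M :: "'i::finite \<Rightarrow> 'i \<Rightarrow> real"
  assumes "i \<noteq> j" "set u \<subseteq> {i, j}" "reduced M (u @ [i])"
  shows "u = rev (alt j i (length u)) \<and>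
    (\<forall>m::nat. m \<ge> 2 \<and> M i j * M j i = 4 * (cos (pi / real m))\<^sup>2 \<longrightarrow> length u < m)"
proof -
  have r: "reduced M (i # rev u)" using assms(3) reduced_rev[of M "u @ [i]"] by simp
  have "i # rev u = alt i j (Suc (length (rev u)))"
  proof (rule noadj_alt)
    show "i \<noteq> j" by fact
    show "set (rev u) \<subseteq> {i, j}" using assms(2) by simp
    show "i # rev u \<noteq> p @ [z, z] @ q" for p q z using r reduced_no_double2 by metis
  qed
  then have a: "i # rev u = alt i j (Suc (length u))" by simp
  then have "rev u = alt j i (length u)" by simp
  then have u: "u = rev (alt j i (length u))" by (metis rev_rev_ident)
  have "length u < m" if m: "m \<ge> 2" "M i j * M j i = 4 * (cos (pi / real m))\<^sup>2" for m :: nat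
  proof -
    have r1: "cox_relator M (concat (replicate m [i, j]))" using m assms(1) by (intro cox_relator.braid) auto
    have r2: "cox_relator M (concat (replicate m [j, i]))" using m assms(1) by (intro cox_relator.braid) (auto simp: mult.commute)
    have "Suc (length u) \<le> m" using reduced_alt_bound[OF r1 r2 _ r[unfolded a]] m by simp
    then show ?thesis by simp
  qed
  then show ?thesis using u by blast
qed

lemma sp_decomp: "i \<noteq> j \<Longrightarrow> sp i j P Q = ad (sc P (uvec i)) (sc Q (uvec j))"
  by (auto simp: sp_def ad_def sc_def uvec_def fun_eq_iff)

lemma root_pos:
  fixes M :: "'i::finite \<Rightarrow> 'i \<Rightarrow> real"
  assumes eg: "egcm M"
  shows "clen M w < clen M (w @ [i]) \<Longrightarrow> 0 \<le> vact M w (uvec i) k"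
proof (induction "clen M w" arbitrary: w i k rule: less_induct)
  case less
  define n where "n = clen M w"
  show ?case
  proof (cases "n = 0")
    case True
    then obtain v where "cox_eq M w v" "length v = 0" using clen_ex n_def by metis
    then have "vact M w (uvec i) = uvec i" using cox_eq_vact[OF eg] by fastforce
    then show ?thesis by (simp add: uvec_def)
  next
    case False
    obtain r where r: "cox_eq M w r" "length r = n" using clen_ex n_def by metis
    then obtain r' j where rj: "r = r' @ [j]" using False by (metis length_0_conv rev_exhaust)
    have "clen M r' \<le> n - 1" using clen_le_length[of M r'] r rj by simp
    moreover have "n \<le> clen M r' + 1"
      using clen_cong[OF r(1)] clen_append[of M r' "[j]"] clen_single[of M j] rj n_def by simp
    ultimately have clr': "clen M r' = n - 1" by simp
    have ji: "j \<noteq> i"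
    proof
      assume "j = i"
      have "cox_eq M (w @ [i]) (r' @ [i, i] @ [])" using cox_eq_congL[OF r(1), of "[i]"] rj \<open>j = i\<close> by simp
      then have "cox_eq M (w @ [i]) (r' @ [])" using cox_eq_cancel2 by (metis cox_eq.trans)
      then have "clen M (w @ [i]) \<le> n - 1" using clen_cong clr' by fastforce
      then show False using less.prems n_def by simp
    qed
    define A where "A = (\<lambda>(v, u). set u \<subseteq> {i, j} \<and> cox_eq M (v @ u) w \<and> clen M v + length u = n)"
    have "A (r', [j])" unfolding A_def using r rj clr' False by (auto simp: cox_eq.sym)
    then obtain p where Ap: "A p" and minp: "\<And>p'. A p' \<Longrightarrow> clen M (fst p) \<le> clen M (fst p')"
      using ex_has_least_nat[of A "(r', [j])" "\<lambda>p. clen M (fst p)"] by blast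
    obtain v u where p: "p = (v, u)" by (cases p)
    have Au: "set u \<subseteq> {i, j}" "cox_eq M (v @ u) w" "clen M v + length u = n" using Ap p A_def by auto
    have cv: "clen M v < n" using minp[OF \<open>A (r', [j])\<close>] p clr' False by simp
    have vx: "clen M v < clen M (v @ [x])" if x: "x \<in> {i, j}" for x
    proof (rule ccontr)
      assume "\<not> clen M v < clen M (v @ [x])"
      then have c1: "clen M v = Suc (clen M (v @ [x]))" using clen_snoc[of M v x] by auto
      have "cox_eq M (v @ [x, x] @ u) (v @ u)" by (rule cox_eq_cancel2)
      then have "cox_eq M ((v @ [x]) @ (x # u)) w" using Au(2) by (auto intro: cox_eq.trans)
      then have "A (v @ [x], x # u)" unfolding A_def using Au x c1 by auto
      then have "clen M v \<le> clen M (v @ [x])" using minp p by fastforce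
      then show False using c1 by simp
    qed
    have cvw: "clen M v < clen M w" using cv n_def by simp
    have IHi: "\<And>l. 0 \<le> vact M v (uvec i) l" using less.hyps[OF cvw vx[of i]] by simp
    have IHj: "\<And>l. 0 \<le> vact M v (uvec j) l" using less.hyps[OF cvw vx[of j]] by simp
    have "n \<le> clen M v + clen M u" using clen_append[of M v u] clen_cong[OF Au(2)] n_def by simp
    then have cu: "clen M u = length u" using Au(3) clen_le_length[of M u] by simp
    have "cox_eq M (w @ [i]) (v @ u @ [i])" using cox_eq_congL[OF cox_eq.sym[OF Au(2)], of "[i]"] by simp
    then have "clen M (w @ [i]) \<le> clen M v + clen M (u @ [i])"
      using clen_cong clen_append[of M v "u @ [i]"] by metis
    then have "clen M u < clen M (u @ [i])" using less.prems n_def Au(3) cu by simp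
    then have "clen M (u @ [i]) = Suc (clen M u)" using clen_snoc[of M u i] by auto
    then have red: "reduced M (u @ [i])" unfolding reduced_def using cu by simp
    have shape: "u = rev (alt j i (length u))"
      and bnd: "\<And>m::nat. m \<ge> 2 \<Longrightarrow> M i j * M j i = 4 * (cos (pi / real m))\<^sup>2 \<Longrightarrow> length u < m"
      using J_shape[OF ji[symmetric] Au(1) red] by auto
    have bd: "M i j * M j i \<ge> 4 \<or> (\<exists>m::nat. m \<ge> 2 \<and> M i j * M j i = 4 * (cos (pi / real m))\<^sup>2 \<and> length u < m)"
      using egcm_cases[OF eg ji[symmetric]] bnd by blast
    obtain P Q where PQ: "P \<ge> 0" "Q \<ge> 0" "vact M (rev (alt j i (length u))) (uvec i) = sp i j P Q"
      using dihedral_pos[OF eg ji[symmetric] bd] by blast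
    have "vact M w (uvec i) = vact M (v @ u) (uvec i)" using cox_eq_vact[OF eg Au(2)] by simp
    also have "\<dots> = vact M v (sp i j P Q)" using PQ(3) shape by (simp add: vact_append)
    also have "\<dots> = ad (sc P (vact M v (uvec i))) (sc Q (vact M v (uvec j)))"
      using sp_decomp[OF ji[symmetric]] by (simp add: vact_ad vact_sc)
    finally have "vact M w (uvec i) k = P * vact M v (uvec i) k + Q * vact M v (uvec j) k"
      by (simp add: ad_def sc_def)
    then show ?thesis using PQ IHi IHj by simp
  qed
qed



definition sig :: "('i \<Rightarrow> real) \<Rightarrow> real" where "sig x = (\<Sum>k\<in>UNIV. x k)"
definition nrm :: "('i \<Rightarrow> real) \<Rightarrow> 'i \<Rightarrow> real" where "nrm x = (\<lambda>k. x k / sig x)"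
definition sroot :: "('i \<Rightarrow> 'i \<Rightarrow> real) \<Rightarrow> ('i \<Rightarrow> real) \<Rightarrow> bool" where
  "sroot M x \<longleftrightarrow> (\<exists>t w i. t \<noteq> 0 \<and> x = sc t (vact M w (uvec i)))"
definition RR :: "('i \<Rightarrow> 'i \<Rightarrow> real) \<Rightarrow> ('i \<Rightarrow> real) set" where
  "RR M = {nrm (vact M w (uvec i)) | w i. True}"
definition Inv :: "('i \<Rightarrow> 'i \<Rightarrow> real) \<Rightarrow> 'i list \<Rightarrow> ('i \<Rightarrow> real) set" where
  "Inv M v = {r \<in> RR M. \<forall>k. vact M v r k \<le> 0}"

lemma vrefl_uvec:
  fixes M :: "'i::finite \<Rightarrow> 'i \<Rightarrow> real"
  assumes "M i i = 2"
  shows "vrefl M i (uvec i) = sc (-1) (uvec i)"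
proof -
  have "ip (M i) (uvec i) = M i i"
  proof -
    have "ip (M i) (uvec i) = (\<Sum>k\<in>UNIV. if k = i then M i i else 0)"
      unfolding ip_def uvec_def by (rule sum.cong) auto
    then show ?thesis by simp
  qed
  then show ?thesis using assms by (auto simp: vrefl_def sc_def uvec_def fun_eq_iff)
qed

lemma sc_zero: "vact M w (\<lambda>_. 0) = (\<lambda>_. 0)"
  using vact_sc[of M w 0 "\<lambda>_. 0"] by (simp add: sc_def)

context
  fixes M :: "'i::finite \<Rightarrow> 'i \<Rightarrow> real"
  assumes eg: "egcm M"
begin

lemma diag: "M i i = 2" by (rule egcm_diag[OF eg])

lemma root_dich: "(\<forall>k. 0 \<le> vact M w (uvec i) k) \<or> (\<forall>k. vact M w (uvec i) k \<le> 0)"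
proof (cases "clen M w < clen M (w @ [i])")
  case True
  then show ?thesis using root_pos[OF eg] by blast
next
  case False
  then have c: "clen M w = Suc (clen M (w @ [i]))" using clen_snoc[of M w i] by auto
  have "cox_eq M (w @ [i, i] @ []) (w @ [])" by (rule cox_eq_cancel2)
  then have "clen M ((w @ [i]) @ [i]) = clen M w" using clen_cong by fastforce
  then have "clen M (w @ [i]) < clen M ((w @ [i]) @ [i])" using c by simp
  then have "\<forall>k. 0 \<le> vact M (w @ [i]) (uvec i) k" using root_pos[OF eg] by blast
  moreover have "vact M (w @ [i]) (uvec i) = sc (-1) (vact M w (uvec i))"
    by (simp add: vact_append vrefl_uvec[OF diag] vact_sc)
  ultimately show ?thesis by (simp add: sc_def)
qed

lemma root_nz: "\<exists>k. vact M w (uvec i) k \<noteq> 0"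
proof (rule ccontr)
  assume "\<not> ?thesis"
  then have "vact M w (uvec i) = (\<lambda>_. 0)" by auto
  then have "vact M (rev w) (vact M w (uvec i)) = (\<lambda>_. 0)" by (simp add: sc_zero)
  then have "uvec i = (\<lambda>_. (0::real))" using vact_rev_cancel[of M w, OF diag] by simp
  then show False unfolding uvec_def by (metis one_neq_zero)
qed

lemma sroot_dich: "sroot M x \<Longrightarrow> (\<forall>k. 0 \<le> x k) \<or> (\<forall>k. x k \<le> 0)"
proof -
  assume "sroot M x"
  then obtain t w i where t: "t \<noteq> 0" "x = sc t (vact M w (uvec i))" unfolding sroot_def by blast
  show ?thesis
  proof (cases "t > 0")
    case True
    then show ?thesis using root_dich[of w i] t by (auto simp: sc_def mult_nonneg_nonneg mult_nonneg_nonpos)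
  next
    case False
    then have "t < 0" using t by simp
    then show ?thesis using root_dich[of w i] t by (auto simp: sc_def mult_nonpos_nonneg mult_nonpos_nonpos)
  qed
qed

lemma sroot_nz: "sroot M x \<Longrightarrow> \<exists>k. x k \<noteq> 0"
proof -
  assume "sroot M x"
  then obtain t w i where t: "t \<noteq> 0" "x = sc t (vact M w (uvec i))" unfolding sroot_def by blast
  obtain k where "vact M w (uvec i) k \<noteq> 0" using root_nz by blast
  then show ?thesis using t by (auto simp: sc_def)
qed

lemma sroot_vact: "sroot M x \<Longrightarrow> sroot M (vact M v x)"
proof -
  assume "sroot M x"
  then obtain t w i where t: "t \<noteq> 0" "x = sc t (vact M w (uvec i))" unfolding sroot_def by blast
  then have "vact M v x = sc t (vact M (v @ w) (uvec i))" by (simp add: vact_sc vact_append)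
  then show ?thesis using t unfolding sroot_def by blast
qed

lemma sroot_vrefl: "sroot M x \<Longrightarrow> sroot M (vrefl M i x)"
  using sroot_vact[of x "[i]"] by simp

lemma sroot_sc: "sroot M x \<Longrightarrow> s \<noteq> 0 \<Longrightarrow> sroot M (sc s x)"
proof -
  assume "sroot M x" "s \<noteq> 0"
  then obtain t w i where t: "t \<noteq> 0" "x = sc t (vact M w (uvec i))" unfolding sroot_def by blast
  then have "sc s x = sc (s * t) (vact M w (uvec i))" by (simp add: sc_def fun_eq_iff)
  then show ?thesis using t \<open>s \<noteq> 0\<close> unfolding sroot_def by (metis mult_eq_0_iff)
qed

lemma sig_pos: "(\<forall>k. 0 \<le> (x::'i \<Rightarrow> real) k) \<Longrightarrow> x k > 0 \<Longrightarrow> sig x > 0"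
  unfolding sig_def by (rule sum_pos2[of UNIV k]) auto

lemma sig_neg: "(\<forall>k. (x::'i \<Rightarrow> real) k \<le> 0) \<Longrightarrow> x k < 0 \<Longrightarrow> sig x < 0"
proof -
  assume a: "\<forall>k. x k \<le> 0" "x k < 0"
  have "sig (\<lambda>k. - x k) > 0" using a by (intro sig_pos[of _ k]) auto
  then show ?thesis by (simp add: sig_def sum_negf)
qed

lemma sroot_sig: "sroot M x \<Longrightarrow> sig x \<noteq> 0"
proof -
  assume s: "sroot M x"
  obtain k where k: "x k \<noteq> 0" using sroot_nz[OF s] by blast
  show ?thesis
    using sroot_dich[OF s]
  proof
    assume a: "\<forall>k. 0 \<le> x k"
    then have "0 < x k" using k a by (metis order_le_less)
    then show ?thesis using sig_pos[OF a] by fastforce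
  next
    assume a: "\<forall>k. x k \<le> 0"
    then have "x k < 0" using k a by (metis order_le_less)
    then show ?thesis using sig_neg[OF a] by fastforce
  qed
qed

lemma sroot_posc: "sroot M x \<Longrightarrow> x k > 0 \<Longrightarrow> (\<forall>l. 0 \<le> x l) \<and> sig x > 0"
proof -
  assume s: "sroot M x" and k: "x k > 0"
  have "\<forall>l. 0 \<le> x l"
    using sroot_dich[OF s]
  proof
    assume "\<forall>l. x l \<le> 0"
    then have "x k \<le> 0" by blast
    then show ?thesis using k by simp
  qed
  then show ?thesis using sig_pos[of x k] k by simp
qed

lemma nrm_sc: "s \<noteq> 0 \<Longrightarrow> nrm (sc s (x::'i \<Rightarrow> real)) = nrm x"
  by (auto simp: nrm_def sc_def sig_def fun_eq_iff sum_distrib_left[symmetric])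

lemma nrm_is_sc: "nrm (x::'i \<Rightarrow> real) = sc (1 / sig x) x"
  by (auto simp: nrm_def sc_def fun_eq_iff)

lemma sroot_RR: "sroot M x \<Longrightarrow> nrm x \<in> RR M"
proof -
  assume "sroot M x"
  then obtain t w i where t: "t \<noteq> 0" "x = sc t (vact M w (uvec i))" unfolding sroot_def by blast
  then have "nrm x = nrm (vact M w (uvec i))" by (simp add: nrm_sc)
  then show ?thesis unfolding RR_def by blast
qed

lemma RR_props: "r \<in> RR M \<Longrightarrow> sroot M r \<and> (\<forall>k. 0 \<le> r k) \<and> sig r = 1"
proof -
  assume "r \<in> RR M"
  then obtain w i where r: "r = nrm (vact M w (uvec i))" unfolding RR_def by blast
  define b where "b = vact M w (uvec i)"
  have sb: "sroot M b" unfolding sroot_def b_def by (rule exI[of _ 1]) (auto simp: sc_def)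
  have s0: "sig b \<noteq> 0" by (rule sroot_sig[OF sb])
  have "sroot M r" unfolding r b_def[symmetric] nrm_is_sc using sb s0 by (intro sroot_sc) auto
  moreover have "\<forall>k. 0 \<le> r k"
  proof -
    obtain k where k: "b k \<noteq> 0" using sroot_nz[OF sb] by blast
    show ?thesis using sroot_dich[OF sb]
    proof
      assume a: "\<forall>k. 0 \<le> b k"
      then have "0 < b k" using k a by (metis order_le_less)
      then have "sig b > 0" using sig_pos[OF a] by fastforce
      then show ?thesis using a unfolding r b_def[symmetric] nrm_def by simp
    next
      assume a: "\<forall>k. b k \<le> 0"
      then have "b k < 0" using k a by (metis order_le_less)
      then have "sig b < 0" using sig_neg[OF a] by fastforce
      then show ?thesis using a unfolding r b_def[symmetric] nrm_def by (simp add: divide_nonpos_neg)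
    qed
  qed
  moreover have "sig r = 1" unfolding r b_def[symmetric] nrm_def sig_def
    using s0 by (simp add: sum_divide_distrib[symmetric] sig_def)
  ultimately show ?thesis by blast
qed

lemma RR_nrm: "r \<in> RR M \<Longrightarrow> nrm r = r"
  using RR_props[of r] by (simp add: nrm_def)

lemma nrm_leftinv: "r \<in> RR M \<Longrightarrow> nrm (vact M (rev w) (nrm (vact M w r))) = r"
proof -
  assume r: "r \<in> RR M"
  have s: "sroot M (vact M w r)" using RR_props[OF r] sroot_vact by blast
  have s0: "1 / sig (vact M w r) \<noteq> 0" using sroot_sig[OF s] by simp
  have "nrm (vact M (rev w) (nrm (vact M w r))) = nrm (sc (1 / sig (vact M w r)) r)"
    unfolding nrm_is_sc[of "vact M w r"] vact_sc vact_rev_cancel[of M, OF diag] ..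
  also have "\<dots> = r" using nrm_sc[OF s0] RR_nrm[OF r] by simp
  finally show ?thesis .
qed

lemma nrm_leftinv1: "r \<in> RR M \<Longrightarrow> nrm (vrefl M i (nrm (vrefl M i r))) = r"
  using nrm_leftinv[of r "[i]"] by simp

lemma uvec_RR: "uvec i \<in> RR M"
proof -
  have "sig (uvec i) = 1" unfolding sig_def uvec_def by simp
  then have "nrm (vact M [] (uvec i)) = uvec i" by (simp add: nrm_def)
  then show ?thesis unfolding RR_def by (metis (mono_tags, lifting) mem_Collect_eq)
qed

lemma pos_coord: "r \<in> RR M \<Longrightarrow> r \<noteq> uvec i \<Longrightarrow> \<exists>k. k \<noteq> i \<and> r k > 0"
proof (rule ccontr)
  assume r: "r \<in> RR M" "r \<noteq> uvec i" "\<not> (\<exists>k. k \<noteq> i \<and> r k > 0)"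
  have P: "\<forall>k. 0 \<le> r k" "sig r = 1" using RR_props[OF r(1)] by auto
  have z: "\<forall>k. k \<noteq> i \<longrightarrow> r k = 0" using P r(3) by (meson antisym not_less)
  then have e: "r = (\<lambda>k. if k = i then r i else 0)" by (auto simp: fun_eq_iff)
  have "sig r = r i" by (subst e) (simp add: sig_def)
  then have ri: "r i = 1" using P by simp
  have "r = uvec i" using z ri by (auto simp: uvec_def fun_eq_iff)
  then show False using r(2) by simp
qed

lemma sroot_posRR: "sroot M x \<Longrightarrow> x k > 0 \<Longrightarrow> nrm x \<in> RR M \<and> nrm x k > 0 \<and> sig x > 0"
  using sroot_posc[of x k] sroot_RR[of x] by (auto simp: nrm_def)

lemma Inv_finite: "finite (Inv M v)"
proof (induction v rule: rev_induct)
  case Nil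
  have "Inv M [] = {}"
  proof -
    have "False" if "r \<in> Inv M []" for r
    proof -
      have "\<forall>k. r k = 0" using that RR_props[of r] unfolding Inv_def by (auto intro: antisym)
      then show False using RR_props[of r] that unfolding Inv_def sig_def by simp
    qed
    then show ?thesis by blast
  qed
  then show ?case by simp
next
  case (snoc i v)
  have "Inv M (v @ [i]) \<subseteq> insert (uvec i) ((\<lambda>r. nrm (vrefl M i r)) ` Inv M v)"
  proof
    fix r assume r: "r \<in> Inv M (v @ [i])"
    show "r \<in> insert (uvec i) ((\<lambda>r. nrm (vrefl M i r)) ` Inv M v)"
    proof (cases "r = uvec i")
      case False
      have rR: "r \<in> RR M" using r unfolding Inv_def by simp
      obtain k where k: "k \<noteq> i" "r k > 0" using pos_coord[OF rR False] by blast
      have s: "sroot M (vrefl M i r)" using RR_props[OF rR] sroot_vrefl by blast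
      have vk: "vrefl M i r k > 0" using k by (simp add: vrefl_def)
      have P: "nrm (vrefl M i r) \<in> RR M" "sig (vrefl M i r) > 0" using sroot_posRR[OF s vk] by auto
      have "\<forall>l. vact M v (nrm (vrefl M i r)) l \<le> 0"
      proof
        fix l
        have "vact M v (nrm (vrefl M i r)) l = (1 / sig (vrefl M i r)) * vact M (v @ [i]) r l"
          unfolding nrm_is_sc vact_sc by (simp add: vact_append sc_def)
        moreover have "vact M (v @ [i]) r l \<le> 0" using r unfolding Inv_def by simp
        ultimately show "vact M v (nrm (vrefl M i r)) l \<le> 0" using P(2) by (simp add: divide_nonpos_pos)
      qed
      then have "nrm (vrefl M i r) \<in> Inv M v" using P unfolding Inv_def by simp
      moreover have "r = nrm (vrefl M i (nrm (vrefl M i r)))" using nrm_leftinv1[OF rR] by simp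
      ultimately show ?thesis by blast
    qed simp
  qed
  then show ?case using snoc finite_subset by blast
qed

lemma reduced_bound: "reduced M w \<Longrightarrow> length w \<le> card (Inv M w)"
proof (induction w rule: rev_induct)
  case Nil then show ?case by simp
next
  case (snoc i w)
  have rw: "reduced M w" and cl: "clen M w < clen M (w @ [i])" using reduced_snocD[OF snoc.prems] by auto
  have IH: "length w \<le> card (Inv M w)" using snoc.IH rw by simp
  have pos: "\<forall>k. 0 \<le> vact M w (uvec i) k" using root_pos[OF eg cl] by blast
  define f where "f = (\<lambda>r. nrm (vrefl M i r))"
  have notu: "r \<noteq> uvec i" if r: "r \<in> Inv M w" for r
  proof
    assume "r = uvec i"
    then have "\<forall>k. vact M w r k = 0" using r pos unfolding Inv_def by (auto intro: antisym)
    moreover have "sroot M (vact M w r)" using r RR_props sroot_vact unfolding Inv_def by blast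
    ultimately show False using sroot_nz by blast
  qed
  have fin: "f r \<in> Inv M (w @ [i])" if r: "r \<in> Inv M w" for r
  proof -
    have rR: "r \<in> RR M" using r unfolding Inv_def by simp
    obtain k where k: "k \<noteq> i" "r k > 0" using pos_coord[OF rR notu[OF r]] by blast
    have s: "sroot M (vrefl M i r)" using RR_props[OF rR] sroot_vrefl by blast
    have vk: "vrefl M i r k > 0" using k by (simp add: vrefl_def)
    have P: "nrm (vrefl M i r) \<in> RR M" "sig (vrefl M i r) > 0" using sroot_posRR[OF s vk] by auto
    have "\<forall>l. vact M (w @ [i]) (f r) l \<le> 0"
    proof
      fix l
      have "vact M (w @ [i]) (f r) l = (1 / sig (vrefl M i r)) * vact M w r l"
        unfolding f_def nrm_is_sc vrefl_sc vact_append vact_sc by (simp add: sc_def vrefl_vrefl[OF diag])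
      moreover have "vact M w r l \<le> 0" using r unfolding Inv_def by simp
      ultimately show "vact M (w @ [i]) (f r) l \<le> 0" using P(2) by (simp add: divide_nonpos_pos)
    qed
    then show ?thesis using P unfolding Inv_def f_def by simp
  qed
  have uin: "uvec i \<in> Inv M (w @ [i])"
  proof -
    have "vact M (w @ [i]) (uvec i) = sc (-1) (vact M w (uvec i))"
      by (simp add: vact_append vrefl_uvec[OF diag] vact_sc)
    then show ?thesis using pos uvec_RR unfolding Inv_def by (simp add: sc_def)
  qed
  have unot: "uvec i \<notin> f ` Inv M w"
  proof
    assume "uvec i \<in> f ` Inv M w"
    then obtain r where r: "r \<in> Inv M w" "uvec i = f r" by blast
    have rR: "r \<in> RR M" using r unfolding Inv_def by simp
    have "r = nrm (vrefl M i (uvec i))" using nrm_leftinv1[OF rR] r(2) unfolding f_def by simp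
    also have "\<dots> = uvec i" using RR_nrm[OF uvec_RR] by (simp add: vrefl_uvec[OF diag] nrm_sc)
    finally show False using notu[OF r(1)] by simp
  qed
  have inj: "inj_on f (Inv M w)"
    by (rule inj_on_inverseI[where g = f]) (use nrm_leftinv1 in \<open>auto simp: f_def Inv_def\<close>)
  have "insert (uvec i) (f ` Inv M w) \<subseteq> Inv M (w @ [i])" using uin fin by blast
  then have "card (insert (uvec i) (f ` Inv M w)) \<le> card (Inv M (w @ [i]))"
    using Inv_finite by (intro card_mono) auto
  moreover have "card (insert (uvec i) (f ` Inv M w)) = Suc (card (Inv M w))"
    using unot Inv_finite card_image[OF inj] by simp
  ultimately show ?case using IH by simp
qed

lemma finite_quotient: "finite (RR M) \<Longrightarrow> finite (UNIV // {(u, v). cox_eq M u v})"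
proof -
  assume fR: "finite (RR M)"
  let ?r = "{(u, v). cox_eq M u v}"
  have "UNIV // ?r \<subseteq> (\<lambda>v. ?r `` {v}) ` {v. set v \<subseteq> UNIV \<and> length v \<le> card (RR M)}"
  proof
    fix C assume "C \<in> UNIV // ?r"
    then obtain x where C: "C = ?r `` {x}" unfolding quotient_def by blast
    obtain v where v: "cox_eq M x v" "length v = clen M x" using clen_ex by blast
    have "reduced M v" unfolding reduced_def using clen_cong[OF v(1)] v(2) by simp
    then have "length v \<le> card (Inv M v)" by (rule reduced_bound)
    also have "\<dots> \<le> card (RR M)" using fR by (intro card_mono) (auto simp: Inv_def)
    finally have lv: "length v \<le> card (RR M)" .
    have "?r `` {x} = ?r `` {v}" using v(1) by (auto intro: cox_eq.trans cox_eq.sym)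
    then show "C \<in> (\<lambda>v. ?r `` {v}) ` {v. set v \<subseteq> UNIV \<and> length v \<le> card (RR M)}" using C lv by blast
  qed
  moreover have "finite {v::'i list. set v \<subseteq> UNIV \<and> length v \<le> card (RR M)}"
    by (rule finite_lists_length_le) simp
  then have "finite ((\<lambda>v. ?r `` {v}) ` {v::'i list. set v \<subseteq> UNIV \<and> length v \<le> card (RR M)})"
    by (rule finite_imageI)
  ultimately show ?thesis by (rule finite_subset)
qed

end



lemma ip_neg: "ip (\<lambda>j. - l j) x = - ip l x"
  by (simp add: ip_def sum_negf)

context
  fixes M :: "'i::finite \<Rightarrow> 'i \<Rightarrow> real"
  assumes eg: "egcm M"
begin

lemma neg_Inv:
  assumes mu: "mu \<in> fund_chamber"
  shows "{r \<in> RR M. ip (word_act M w mu) r < 0} \<subseteq> Inv M (rev w)"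
proof
  fix r assume r: "r \<in> {r \<in> RR M. ip (word_act M w mu) r < 0}"
  then have rR: "r \<in> RR M" and n: "ip mu (vact M (rev w) r) < 0" by (auto simp: ip_word_act)
  have s: "sroot M (vact M (rev w) r)" using RR_props[OF eg rR] sroot_vact[OF eg] by blast
  have "\<forall>k. vact M (rev w) r k \<le> 0"
    using sroot_dich[OF eg s]
  proof
    assume a: "\<forall>k. 0 \<le> vact M (rev w) r k"
    have "0 \<le> ip mu (vact M (rev w) r)" unfolding ip_def
      using a mu by (intro sum_nonneg) (auto simp: fund_chamber_def)
    then show ?thesis using n by simp
  qed
  then show "r \<in> Inv M (rev w)" using rR unfolding Inv_def by simp
qed

definition GG :: "'i \<Rightarrow> ('i \<Rightarrow> real) set" where "GG k = {r \<in> RR M. r k > 0}"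

lemma propagate:
  assumes fin: "finite (GG k)" and adj: "k \<noteq> k'" "M k k' \<noteq> 0"
  shows "finite (GG k')"
proof -
  have "GG k' \<subseteq> GG k \<union> (\<lambda>r. nrm (vrefl M k r)) ` GG k"
  proof
    fix r assume r: "r \<in> GG k'"
    show "r \<in> GG k \<union> (\<lambda>r. nrm (vrefl M k r)) ` GG k"
    proof (cases "r \<in> GG k")
      case False
      have rR: "r \<in> RR M" and rk': "r k' > 0" using r unfolding GG_def by auto
      have P: "\<forall>l. 0 \<le> r l" using RR_props[OF eg rR] by simp
      have "\<not> r k > 0" using False rR unfolding GG_def by simp
      then have rk: "r k = 0" using P[rule_format, of k] by linarith
      have mk: "M k k' < 0" using egcm_neg[OF eg adj(1)] adj(2) by simp
      have t: "\<forall>l \<in> UNIV - {k'}. M k l * r l \<le> 0"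
      proof
        fix l assume "l \<in> UNIV - {k'}"
        show "M k l * r l \<le> 0"
        proof (cases "l = k")
          case True then show ?thesis using rk by simp
        next
          case False then show ?thesis using egcm_neg[OF eg False[symmetric]] P
            by (simp add: mult_nonpos_nonneg)
        qed
      qed
      have "ip (M k) r = M k k' * r k' + (\<Sum>l\<in>UNIV - {k'}. M k l * r l)"
        unfolding ip_def by (rule sum.remove) auto
      also have "\<dots> \<le> M k k' * r k'" using sum_nonpos[of "UNIV - {k'}" "\<lambda>l. M k l * r l"] t by simp
      also have "\<dots> < 0" using mk rk' by (simp add: mult_neg_pos)
      finally have ipn: "ip (M k) r < 0" .
      have vk: "vrefl M k r k > 0" using ipn rk by (simp add: vrefl_def)
      have s: "sroot M (vrefl M k r)" using RR_props[OF eg rR] sroot_vrefl[OF eg] by blast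
      have "nrm (vrefl M k r) \<in> GG k" using sroot_posRR[OF eg s vk] unfolding GG_def by simp
      moreover have "r = nrm (vrefl M k (nrm (vrefl M k r)))" using nrm_leftinv1[OF eg rR] by simp
      ultimately show ?thesis by blast
    qed simp
  qed
  moreover have "finite (GG k \<union> (\<lambda>r. nrm (vrefl M k r)) ` GG k)" using fin by simp
  ultimately show ?thesis by (rule finite_subset)
qed

lemma main_finite:
  assumes conn: "egcm_connected M"
    and l1: "lam \<in> tits_cone M" and l2: "(\<lambda>j. - lam j) \<in> tits_cone M"
    and nz: "lam \<noteq> (\<lambda>j. 0)"
  shows "finite (RR M)"
proof -
  obtain w mu where mu: "mu \<in> fund_chamber" "lam = word_act M w mu"
    using l1 unfolding tits_cone_def by blast
  obtain w' mu' where mu': "mu' \<in> fund_chamber" "(\<lambda>j. - lam j) = word_act M w' mu'"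
    using l2 unfolding tits_cone_def by blast
  define F where "F = {r \<in> RR M. ip lam r \<noteq> 0}"
  have "F \<subseteq> Inv M (rev w) \<union> Inv M (rev w')"
  proof
    fix r assume r: "r \<in> F"
    show "r \<in> Inv M (rev w) \<union> Inv M (rev w')"
    proof (cases "ip lam r < 0")
      case True
      then show ?thesis using r neg_Inv[OF mu(1), of w] mu(2) unfolding F_def by blast
    next
      case False
      then have "ip (\<lambda>j. - lam j) r < 0" using r unfolding F_def by (simp add: ip_neg)
      then show ?thesis using r neg_Inv[OF mu'(1), of w'] mu'(2) unfolding F_def by auto
    qed
  qed
  then have finF: "finite F" using Inv_finite[OF eg] by (meson finite_UnI finite_subset)
  have mu0: "\<forall>k. 0 \<le> mu k" using mu(1) unfolding fund_chamber_def by simp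
  obtain s where s: "mu s > 0"
  proof -
    have "\<exists>s. mu s \<noteq> 0"
    proof (rule ccontr)
      assume "\<not> ?thesis"
      then have "mu = (\<lambda>_. 0)" by auto
      then show False using nz mu(2) word_act_zero by metis
    qed
    then show ?thesis using that mu0 by (metis order_le_less)
  qed
  define g where "g = (\<lambda>r. nrm (vact M w r))"
  have gF: "g r \<in> F" if r: "r \<in> GG s" for r
  proof -
    have rR: "r \<in> RR M" and rs: "r s > 0" using r unfolding GG_def by auto
    have sr: "sroot M (vact M w r)" using RR_props[OF eg rR] sroot_vact[OF eg] by blast
    have gR: "g r \<in> RR M" unfolding g_def by (rule sroot_RR[OF eg sr])
    have sg: "sig (vact M w r) \<noteq> 0" by (rule sroot_sig[OF eg sr])
    have "ip mu r > 0" unfolding ip_def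
      using RR_props[OF eg rR] mu0 rs s by (intro sum_pos2[of UNIV s]) auto
    moreover have "ip lam (g r) = (1 / sig (vact M w r)) * ip mu r"
      unfolding g_def nrm_is_sc[OF eg] ip_sc mu(2) ip_word_act vact_rev_cancel[of M, OF egcm_diag[OF eg]] ..
    ultimately have "ip lam (g r) \<noteq> 0" using sg by simp
    then show ?thesis using gR unfolding F_def by simp
  qed
  have inj: "inj_on g (GG s)"
    by (rule inj_on_inverseI[where g = "\<lambda>y. nrm (vact M (rev w) y)"])
      (use nrm_leftinv[OF eg] in \<open>auto simp: g_def GG_def\<close>)
  have "finite (g ` GG s)" using gF finF by (meson finite_subset image_subsetI)
  then have finGs: "finite (GG s)" using finite_imageD inj by blast
  have finall: "finite (GG k)" for k
  proof -
    have "(s, k) \<in> {(a, b). egcm_adjacent M a b}\<^sup>*" using conn unfolding egcm_connected_def by blast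
    then show ?thesis
    proof (induction rule: rtrancl_induct)
      case base then show ?case by (rule finGs)
    next
      case (step y z)
      then show ?case using propagate unfolding egcm_adjacent_def by blast
    qed
  qed
  have "RR M \<subseteq> (\<Union>k. GG k)"
  proof
    fix r assume rR: "r \<in> RR M"
    have P: "\<forall>k. 0 \<le> r k" "sig r = 1" using RR_props[OF eg rR] by auto
    have "\<exists>k. r k > 0"
    proof (rule ccontr)
      assume "\<not> ?thesis"
      then have "\<forall>k. r k \<le> 0" by (simp add: not_less)
      then have "sig r \<le> 0" unfolding sig_def by (simp add: sum_nonpos)
      then show False using P by simp
    qed
    then show "r \<in> (\<Union>k. GG k)" using rR unfolding GG_def by blast
  qed
  moreover have "finite (\<Union>k. GG k)" using finall by simp
  ultimately show ?thesis by (rule finite_subset)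
qed

end

theorem proposition4p11:
  fixes M :: "'i::finite \<Rightarrow> 'i \<Rightarrow> real"
  assumes "egcm M"
    and "egcm_connected M"
    and "unital_OA_cyclic M"
    and "coxeter_group_infinite M"
  shows "tits_cone M \<inter> (\<lambda>l. (\<lambda>j. - l j)) ` tits_cone M = {(\<lambda>j. 0)}"
proof
  have z: "(\<lambda>j. 0) \<in> tits_cone M"
  proof -
    have "(\<lambda>j. 0::real) \<in> (fund_chamber :: ('i \<Rightarrow> real) set)" unfolding fund_chamber_def by simp
    moreover have "word_act M [] (\<lambda>j. 0) = (\<lambda>j. 0)" by simp
    ultimately show ?thesis unfolding tits_cone_def by (metis (no_types, lifting) UN_I UNIV_I image_eqI)
  qed
  moreover have "(\<lambda>j. 0) \<in> (\<lambda>l. (\<lambda>j. - l j)) ` tits_cone M"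
    using z by (intro image_eqI[where x = "\<lambda>j. 0"]) auto
  ultimately show "{(\<lambda>j. 0)} \<subseteq> tits_cone M \<inter> (\<lambda>l. (\<lambda>j. - l j)) ` tits_cone M" by blast
next
  show "tits_cone M \<inter> (\<lambda>l. (\<lambda>j. - l j)) ` tits_cone M \<subseteq> {(\<lambda>j. 0)}"
  proof
    fix lam assume lam: "lam \<in> tits_cone M \<inter> (\<lambda>l. (\<lambda>j. - l j)) ` tits_cone M"
    then obtain l where l: "l \<in> tits_cone M" "lam = (\<lambda>j. - l j)" by blast
    have l2: "(\<lambda>j. - lam j) \<in> tits_cone M" using l by simp
    show "lam \<in> {(\<lambda>j. 0)}"
    proof (rule ccontr)
      assume "lam \<notin> {(\<lambda>j. 0)}"
      then have nz: "lam \<noteq> (\<lambda>j. 0)" by simp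
      have "finite (RR M)" using main_finite[OF assms(1,2) _ l2 nz] lam by blast
      then have "finite (UNIV // {(u, v). cox_eq M u v})" by (rule finite_quotient[OF assms(1)])
      then show False using assms(4) unfolding coxeter_group_infinite_def by simp
    qed
  qed
qed


end
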